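(* The variety $\mathsf{V}(S_{(4,413)})$ is the ai-semiring variety defined by the identities $xy\approx yx$, $x^2\approx x^2+x$, $x+xy\approx x^2+xy$, $x_1x_2x_3\approx x_1x_2x_3+x_4$, $x^2+yz\approx x^2+yz+xy$.
   Context: An ai-semiring is an algebra $(S,+,\cdot)$ with $(S,+)$ a semilattice, $(S,\cdot)$ a semigroup, and both distributive laws. $\mathsf{V}(S)$ is the variety generated by $S$; "the ai-semiring variety defined by identities $\Sigma$" is the class of all ai-semirings satisfying $\Sigma$. $S_{(4,413)}$ has carrier $\{1,2,3,4\}$; addition: $x+x=x$, $2+x=x$, $1+x=1$ for all $x$, $3+4=1$; multiplication (row $a$, column $b$ gives $a\cdot b$): row $1$: $1,1,1,1$; row $2$: $1,3,1,3$; row $3$: $1,1,1,1$; row $4$: $1,3,1,1$. *)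

theory Defs
  imports Main
begin

datatype trm = Var nat | Plus trm trm | Times trm trm

fun eval :: "('a \<Rightarrow> 'a \<Rightarrow> 'a) \<Rightarrow> ('a \<Rightarrow> 'a \<Rightarrow> 'a) \<Rightarrow> (nat \<Rightarrow> 'a) \<Rightarrow> trm \<Rightarrow> 'a" where
  "eval ad mu \<rho> (Var i) = \<rho> i"
| "eval ad mu \<rho> (Plus s t) = ad (eval ad mu \<rho> s) (eval ad mu \<rho> t)"
| "eval ad mu \<rho> (Times s t) = mu (eval ad mu \<rho> s) (eval ad mu \<rho> t)"

definition holds_in :: "'a set \<Rightarrow> ('a \<Rightarrow> 'a \<Rightarrow> 'a) \<Rightarrow> ('a \<Rightarrow> 'a \<Rightarrow> 'a) \<Rightarrow> trm \<Rightarrow> trm \<Rightarrow> bool" where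
  "holds_in A ad mu s t \<longleftrightarrow> (\<forall>\<rho>. (\<forall>i. \<rho> i \<in> A) \<longrightarrow> eval ad mu \<rho> s = eval ad mu \<rho> t)"

text \<open>An algebra (whole type 'b with add, mul) lies in the variety generated by the
  algebra (A, addA, mulA): it satisfies every identity satisfied by that algebra
  (by Birkhoff's HSP theorem, this is V(A)).\<close>
definition in_variety_generated ::
  "'a set \<Rightarrow> ('a \<Rightarrow> 'a \<Rightarrow> 'a) \<Rightarrow> ('a \<Rightarrow> 'a \<Rightarrow> 'a) \<Rightarrow> ('b \<Rightarrow> 'b \<Rightarrow> 'b) \<Rightarrow> ('b \<Rightarrow> 'b \<Rightarrow> 'b) \<Rightarrow> bool" where
  "in_variety_generated A addA mulA ad mu \<longleftrightarrow>
     (\<forall>s t. holds_in A addA mulA s t \<longrightarrow> holds_in UNIV ad mu s t)"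

definition ai_semiring :: "('a \<Rightarrow> 'a \<Rightarrow> 'a) \<Rightarrow> ('a \<Rightarrow> 'a \<Rightarrow> 'a) \<Rightarrow> bool" where
  "ai_semiring ad mu \<longleftrightarrow>
     (\<forall>x y z. ad (ad x y) z = ad x (ad y z)) \<and>
     (\<forall>x y. ad x y = ad y x) \<and>
     (\<forall>x. ad x x = x) \<and>
     (\<forall>x y z. mu (mu x y) z = mu x (mu y z)) \<and>
     (\<forall>x y z. mu x (ad y z) = ad (mu x y) (mu x z)) \<and>
     (\<forall>x y z. mu (ad x y) z = ad (mu x z) (mu y z))"

text \<open>S_(4,413) on carrier {1,2,3,4} \<subseteq> nat (values outside the carrier are irrelevant).\<close>
definition S_carrier :: "nat set" where "S_carrier = {1,2,3,4}"

definition S_add :: "nat \<Rightarrow> nat \<Rightarrow> nat" where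
  "S_add a b = (if a = b then a else if a = 2 then b else if b = 2 then a else 1)"

definition S_mul :: "nat \<Rightarrow> nat \<Rightarrow> nat" where
  "S_mul a b = (if (a = 2 \<and> (b = 2 \<or> b = 4)) \<or> (a = 4 \<and> b = 2) then 3 else 1)"

end

theory Submission
  imports Defs
begin

datatype mono = One nat | Two nat nat | Big

fun evm :: "('a \<Rightarrow> 'a \<Rightarrow> 'a) \<Rightarrow> (nat \<Rightarrow> 'a) \<Rightarrow> mono \<Rightarrow> 'a" where
  "evm mu r (One i) = r i"
| "evm mu r (Two i j) = mu (r i) (r j)"
| "evm mu r Big = mu (mu (r 0) (r 0)) (r 0)"

fun sm :: "('a \<Rightarrow> 'a \<Rightarrow> 'a) \<Rightarrow> ('a \<Rightarrow> 'a \<Rightarrow> 'a) \<Rightarrow> (nat \<Rightarrow> 'a) \<Rightarrow> mono list \<Rightarrow> 'a" where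
  "sm ad mu r [] = undefined"
| "sm ad mu r [m] = evm mu r m"
| "sm ad mu r (m # n # l) = ad (evm mu r m) (sm ad mu r (n # l))"

fun pr :: "mono \<Rightarrow> mono \<Rightarrow> mono" where
  "pr (One i) (One j) = Two i j"
| "pr _ _ = Big"

fun ms :: "trm \<Rightarrow> mono list" where
  "ms (Var i) = [One i]"
| "ms (Plus s t) = ms s @ ms t"
| "ms (Times s t) = concat (map (\<lambda>a. map (pr a) (ms t)) (ms s))"

lemma ms_ne: "ms t \<noteq> []"
  by (induction t) auto

locale sr =
  fixes ad mu :: "'a \<Rightarrow> 'a \<Rightarrow> 'a"
  assumes aa: "ad (ad x y) z = ad x (ad y z)" and ac: "ad x y = ad y x" and ai: "ad x x = x"
  and ma: "mu (mu x y) z = mu x (mu y z)" and mc: "mu x y = mu y x"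
  and dl: "mu x (ad y z) = ad (mu x y) (mu x z)"
  and tr: "mu (mu x y) z = ad (mu (mu x y) z) w"
begin

lemma dr: "mu (ad y z) x = ad (mu y x) (mu z x)"
  using dl mc by metis

lemma trip: "mu (mu a b) c = mu (mu a' b') c'"
  by (metis ac tr)

lemma ev_pr: "evm mu r (pr a b) = mu (evm mu r a) (evm mu r b)"
  by (cases a; cases b) (simp_all, (metis ma trip)+)

lemma sm_cons: "xs \<noteq> [] \<Longrightarrow> sm ad mu r (x # xs) = ad (evm mu r x) (sm ad mu r xs)"
  by (cases xs) auto

lemma sm_app: "xs \<noteq> [] \<Longrightarrow> ys \<noteq> [] \<Longrightarrow> sm ad mu r (xs @ ys) = ad (sm ad mu r xs) (sm ad mu r ys)"
  by (induction xs rule: list_nonempty_induct) (auto simp: sm_cons aa)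

lemma sm_map: "ys \<noteq> [] \<Longrightarrow> sm ad mu r (map (pr a) ys) = mu (evm mu r a) (sm ad mu r ys)"
  by (induction ys rule: list_nonempty_induct) (auto simp: sm_cons ev_pr dl)

lemma sm_concat: "xs \<noteq> [] \<Longrightarrow> ys \<noteq> [] \<Longrightarrow>
   sm ad mu r (concat (map (\<lambda>a. map (pr a) ys) xs)) = mu (sm ad mu r xs) (sm ad mu r ys)"
  by (induction xs rule: list_nonempty_induct) (auto simp: sm_cons sm_map sm_app dr)

lemma eval_sm: "eval ad mu r t = sm ad mu r (ms t)"
  by (induction t) (auto simp: sm_app sm_concat ms_ne)

lemma le_mem: "m \<in> set L \<Longrightarrow> ad (evm mu r m) (sm ad mu r L) = sm ad mu r L"
proof -
  assume "m \<in> set L"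
  then have "L \<noteq> []" by auto
  then show ?thesis using \<open>m \<in> set L\<close>
    by (induction L rule: list_nonempty_induct) (auto simp: sm_cons ai, (metis aa ac ai)+)
qed

lemma le_bound: "L \<noteq> [] \<Longrightarrow> (\<forall>m\<in>set L. ad (evm mu r m) c = c) \<Longrightarrow> ad (sm ad mu r L) c = c"
  by (induction L rule: list_nonempty_induct) (auto simp: sm_cons aa)

lemma le_trans: "ad a b = b \<Longrightarrow> ad b c = c \<Longrightarrow> ad a c = c"
  by (metis aa)

lemma le_sup: "ad a c = c \<Longrightarrow> ad b c = c \<Longrightarrow> ad (ad a b) c = c"
  by (metis aa)

lemma le_supI: "ad a (ad a b) = ad a b"
  by (metis aa ai)

lemma le_antisym: "ad a b = b \<Longrightarrow> ad b a = a \<Longrightarrow> a = b"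
  by (metis ac)

end

definition "Vv L x \<longleftrightarrow> One x \<in> set L"
definition "Q0 L x \<longleftrightarrow> Two x x \<in> set L"
definition "Pr L x y \<longleftrightarrow> Two x y \<in> set L \<or> Two y x \<in> set L"
definition "Qc L x \<longleftrightarrow> Q0 L x \<or> (Vv L x \<and> (\<exists>y. Pr L x y))"

fun covered :: "mono \<Rightarrow> mono list \<Rightarrow> bool" where
  "covered Big L \<longleftrightarrow> Big \<in> set L"
| "covered (One x) L \<longleftrightarrow> Big \<in> set L \<or> Vv L x \<or> Q0 L x"
| "covered (Two x y) L \<longleftrightarrow> Big \<in> set L \<or> Pr L x y \<or> (x = y \<and> Qc L x)
     \<or> (Qc L x \<and> (\<exists>z. Pr L y z)) \<or> (Qc L y \<and> (\<exists>z. Pr L x z))"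

locale sr2 = sr +
  assumes i1: "mu x x = ad (mu x x) x"
  and i2: "ad x (mu x y) = ad (mu x x) (mu x y)"
  and i5: "ad (mu x x) (mu y z) = ad (ad (mu x x) (mu y z)) (mu x y)"
begin

abbreviation "le a b \<equiv> ad a b = b"

lemma A_big: "Big \<in> set L \<Longrightarrow> le a (sm ad mu r L)"
proof -
  assume "Big \<in> set L"
  then have "le (evm mu r Big) (sm ad mu r L)" by (rule le_mem)
  moreover have "le a (evm mu r Big)" by (simp, metis tr ac)
  ultimately show ?thesis by (rule le_trans[rotated])
qed

lemma A_pr: "Pr L x y \<Longrightarrow> le (mu (r x) (r y)) (sm ad mu r L)"
  unfolding Pr_def using le_mem[of "Two x y" L r] le_mem[of "Two y x" L r] mc by auto

lemma A_v: "Vv L x \<Longrightarrow> le (r x) (sm ad mu r L)"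
  unfolding Vv_def using le_mem[of "One x" L r] by auto

lemma A_q0: "Q0 L x \<Longrightarrow> le (mu (r x) (r x)) (sm ad mu r L)"
  unfolding Q0_def using le_mem[of "Two x x" L r] by auto

lemma A_q0v: "Q0 L x \<Longrightarrow> le (r x) (sm ad mu r L)"
proof -
  assume "Q0 L x"
  then have "le (mu (r x) (r x)) (sm ad mu r L)" by (rule A_q0)
  moreover have "le (r x) (mu (r x) (r x))" by (metis i1 ac)
  ultimately show ?thesis by (rule le_trans[rotated])
qed

lemma A_qc: "Qc L x \<Longrightarrow> le (mu (r x) (r x)) (sm ad mu r L)"
proof -
  assume "Qc L x"
  show ?thesis
  proof (cases "Q0 L x")
    case True then show ?thesis by (rule A_q0)
  next
    case False
    with \<open>Qc L x\<close> obtain y where "Vv L x" "Pr L x y" unfolding Qc_def by auto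
    then have "le (ad (r x) (mu (r x) (r y))) (sm ad mu r L)"
      using A_v A_pr le_sup by blast
    then have "le (ad (mu (r x) (r x)) (mu (r x) (r y))) (sm ad mu r L)" by (simp add: i2)
    moreover have "le (mu (r x) (r x)) (ad (mu (r x) (r x)) (mu (r x) (r y)))" by (rule le_supI)
    ultimately show ?thesis by (rule le_trans[rotated])
  qed
qed

lemma A_qcp: "Qc L x \<Longrightarrow> Pr L y z \<Longrightarrow> le (mu (r x) (r y)) (sm ad mu r L)"
proof -
  assume "Qc L x" "Pr L y z"
  then have "le (ad (mu (r x) (r x)) (mu (r y) (r z))) (sm ad mu r L)"
    using A_qc A_pr le_sup by blast
  moreover have "le (mu (r x) (r y)) (ad (mu (r x) (r x)) (mu (r y) (r z)))"
    by (metis i5 ac)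
  ultimately show ?thesis by (rule le_trans[rotated])
qed

lemma A_cov: "covered m L \<Longrightarrow> le (evm mu r m) (sm ad mu r L)"
proof (cases m)
  case (One x)
  assume "covered m L"
  then show ?thesis using One A_big A_v A_q0v by auto
next
  case (Two x y)
  assume "covered m L"
  then show ?thesis using Two A_big A_pr A_qc A_qcp mc by auto (metis A_qcp mc)
next
  case Big
  assume "covered m L"
  then show ?thesis using Big A_big by auto
qed

end

interpretation S: sr S_add S_mul
  by unfold_locales (auto simp: S_add_def S_mul_def)

lemma S_23: "L \<noteq> [] \<Longrightarrow> (\<forall>m\<in>set L. evm S_mul r m \<in> {2,3}) \<Longrightarrow> sm S_add S_mul r L \<in> {2,3}"
  by (induction L rule: list_nonempty_induct) (auto simp: S.sm_cons S_add_def)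

lemma S_bad: "L \<noteq> [] \<Longrightarrow> (\<forall>m\<in>set L. evm S_mul r m \<in> {2,3}) \<Longrightarrow> evm S_mul r m \<in> {1,4}
  \<Longrightarrow> S_add (evm S_mul r m) (sm S_add S_mul r L) \<noteq> sm S_add S_mul r L"
  using S_23[of L r] by (auto simp: S_add_def)

lemma S_sepI: "L \<noteq> [] \<Longrightarrow> (\<forall>i. r i \<in> {2,3,4}) \<Longrightarrow> (\<forall>m\<in>set L. evm S_mul r m \<in> {2,3}) \<Longrightarrow> evm S_mul r m \<in> {1,4}
  \<Longrightarrow> \<exists>r. (\<forall>i. r i \<in> S_carrier) \<and> S_add (evm S_mul r m) (sm S_add S_mul r L) \<noteq> sm S_add S_mul r L"
  using S_bad[of L r m] by (auto simp: S_carrier_def)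

lemma S_sep: "L \<noteq> [] \<Longrightarrow> \<not> covered m L
  \<Longrightarrow> \<exists>r. (\<forall>i. r i \<in> S_carrier) \<and> S_add (evm S_mul r m) (sm S_add S_mul r L) \<noteq> sm S_add S_mul r L"
proof (cases m)
  case (One x)
  assume L: "L \<noteq> []" and nc: "\<not> covered m L"
  show ?thesis
  proof (rule S_sepI[OF L, of "(\<lambda>_. 2)(x := 4)"])
    show "\<forall>m\<in>set L. evm S_mul ((\<lambda>_. 2)(x := 4)) m \<in> {2, 3}"
      using nc One by (intro ballI, rename_tac q, case_tac q) (auto simp: S_mul_def Vv_def Q0_def)
  qed (auto simp: One)
next
  case Big
  assume L: "L \<noteq> []" and nc: "\<not> covered m L"
  show ?thesis
  proof (rule S_sepI[OF L, of "\<lambda>_. 2"])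
    show "\<forall>m\<in>set L. evm S_mul (\<lambda>_. 2) m \<in> {2, 3}"
      using nc Big by (intro ballI, rename_tac q, case_tac q) (auto simp: S_mul_def)
  qed (auto simp: Big S_mul_def)
next
  case (Two x y)
  assume L: "L \<noteq> []" and nc: "\<not> covered m L"
  have nb: "Big \<notin> set L" and np: "\<not> Pr L x y" and n1: "\<not> (x = y \<and> Qc L x)"
    and n2: "\<not> (Qc L x \<and> (\<exists>z. Pr L y z))" and n3: "\<not> (Qc L y \<and> (\<exists>z. Pr L x z))"
    using nc Two by auto
  show ?thesis
  proof (cases "x = y")
    case True
    then have nq: "\<not> Qc L x" using n1 by auto
    show ?thesis
    proof (cases "Vv L x")
      case True
      show ?thesis
      proof (rule S_sepI[OF L, of "(\<lambda>_. 2)(x := 3)"])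
        show "\<forall>m\<in>set L. evm S_mul ((\<lambda>_. 2)(x := 3)) m \<in> {2, 3}"
          using nq nb True by (intro ballI, rename_tac q, case_tac q) (auto simp: S_mul_def Qc_def Q0_def Pr_def)
      qed (auto simp: Two \<open>x = y\<close> S_mul_def)
    next
      case False
      show ?thesis
      proof (rule S_sepI[OF L, of "(\<lambda>_. 2)(x := 4)"])
        show "\<forall>m\<in>set L. evm S_mul ((\<lambda>_. 2)(x := 4)) m \<in> {2, 3}"
          using nq nb False by (intro ballI, rename_tac q, case_tac q) (auto simp: S_mul_def Qc_def Q0_def Pr_def Vv_def)
      qed (auto simp: Two \<open>x = y\<close> S_mul_def)
    qed
  next
    case xy: False
    show ?thesis
    proof (cases "Qc L x")
      case True
      then have "\<not> (\<exists>z. Pr L y z)" using n2 by auto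
      show ?thesis
      proof (rule S_sepI[OF L, of "(\<lambda>_. 2)(y := 3)"])
        show "\<forall>m\<in>set L. evm S_mul ((\<lambda>_. 2)(y := 3)) m \<in> {2, 3}"
          using \<open>\<not> (\<exists>z. Pr L y z)\<close> nb by (intro ballI, rename_tac q, case_tac q) (auto simp: S_mul_def Pr_def)
      qed (auto simp: Two xy S_mul_def)
    next
      case nqx: False
      show ?thesis
      proof (cases "Qc L y")
        case True
        then have "\<not> (\<exists>z. Pr L x z)" using n3 by auto
        show ?thesis
        proof (rule S_sepI[OF L, of "(\<lambda>_. 2)(x := 3)"])
          show "\<forall>m\<in>set L. evm S_mul ((\<lambda>_. 2)(x := 3)) m \<in> {2, 3}"
            using \<open>\<not> (\<exists>z. Pr L x z)\<close> nb by (intro ballI, rename_tac q, case_tac q) (auto simp: S_mul_def Pr_def)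
        qed (auto simp: Two xy S_mul_def)
      next
        case nqy: False
        let ?r = "(\<lambda>_. 2::nat)(x := if Vv L x then 3 else 4, y := if Vv L y then 3 else 4)"
        show ?thesis
        proof (rule S_sepI[OF L, of ?r])
          show "\<forall>m\<in>set L. evm S_mul ?r m \<in> {2, 3}"
            using nqx nqy np nb xy by (intro ballI, rename_tac q, case_tac q) (auto simp: S_mul_def Pr_def Qc_def Q0_def Vv_def)
        qed (auto simp: Two xy S_mul_def)
      qed
    qed
  qed
qed

lemma S_id: "(\<And>r. eval S_add S_mul r s = eval S_add S_mul r t) \<Longrightarrow> holds_in S_carrier S_add S_mul s t"
  unfolding holds_in_def by auto

lemma backward:
  assumes A: "sr2 ad mu" and h: "holds_in S_carrier S_add S_mul s t"
  shows "holds_in UNIV ad mu s t"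
proof -
  interpret A: sr2 ad mu by (rule A)
  have key: "ad (eval ad mu r s) (eval ad mu r t) = eval ad mu r t"
    if h: "holds_in S_carrier S_add S_mul s t" for s t r
  proof -
    have "\<forall>m\<in>set (ms s). covered m (ms t)"
    proof (rule ccontr)
      assume "\<not> (\<forall>m\<in>set (ms s). covered m (ms t))"
      then obtain m where m: "m \<in> set (ms s)" "\<not> covered m (ms t)" by auto
      from S_sep[OF ms_ne m(2)] obtain r' where r': "\<forall>i. r' i \<in> S_carrier"
        "S_add (evm S_mul r' m) (sm S_add S_mul r' (ms t)) \<noteq> sm S_add S_mul r' (ms t)" by auto
      have "eval S_add S_mul r' s = eval S_add S_mul r' t" using h r'(1) unfolding holds_in_def by auto
      then have "sm S_add S_mul r' (ms s) = sm S_add S_mul r' (ms t)" by (simp add: S.eval_sm)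
      moreover have "S_add (evm S_mul r' m) (sm S_add S_mul r' (ms s)) = sm S_add S_mul r' (ms s)"
        using S.le_mem[OF m(1)] .
      ultimately show False using r'(2) by simp
    qed
    then have "\<forall>m\<in>set (ms s). ad (evm mu r m) (sm ad mu r (ms t)) = sm ad mu r (ms t)"
      by (intro ballI A.A_cov) simp
    then show ?thesis using A.le_bound[OF ms_ne] by (simp add: A.eval_sm)
  qed
  have h2: "holds_in S_carrier S_add S_mul t s" using h unfolding holds_in_def by auto
  show ?thesis unfolding holds_in_def
  proof (intro allI impI)
    fix r :: "nat \<Rightarrow> 'a"
    show "eval ad mu r s = eval ad mu r t"
      by (rule A.le_antisym[OF key[OF h] key[OF h2]])
  qed
qed

lemma fwd:
  assumes "in_variety_generated S_carrier S_add S_mul ad mu"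
  shows "ai_semiring ad mu \<and>
     (\<forall>x y. mu x y = mu y x) \<and>
     (\<forall>x. mu x x = ad (mu x x) x) \<and>
     (\<forall>x y. ad x (mu x y) = ad (mu x x) (mu x y)) \<and>
     (\<forall>x1 x2 x3 x4. mu (mu x1 x2) x3 = ad (mu (mu x1 x2) x3) x4) \<and>
     (\<forall>x y z. ad (mu x x) (mu y z) = ad (ad (mu x x) (mu y z)) (mu x y))"
proof -
  have I: "\<And>s t r. (\<And>r. eval S_add S_mul r s = eval S_add S_mul r t) \<Longrightarrow> eval ad mu r s = eval ad mu r t"
    using assms unfolding in_variety_generated_def holds_in_def by blast
  let ?r = "\<lambda>x y z w. (\<lambda>i::nat. if i = 0 then x else if i = 1 then y else if i = 2 then z else w)"
  have aa: "ad (ad x y) z = ad x (ad y z)" for x y z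
    using I[of "Plus (Plus (Var 0) (Var 1)) (Var 2)" "Plus (Var 0) (Plus (Var 1) (Var 2))" "?r x y z z"]
    unfolding S_add_def S_mul_def by auto
  have ac: "ad x y = ad y x" for x y
    using I[of "Plus (Var 0) (Var 1)" "Plus (Var 1) (Var 0)" "?r x y y y"]
    unfolding S_add_def S_mul_def by auto
  have ai: "ad x x = x" for x
    using I[of "Plus (Var 0) (Var 0)" "Var 0" "?r x x x x"]
    unfolding S_add_def S_mul_def by auto
  have ma: "mu (mu x y) z = mu x (mu y z)" for x y z
    using I[of "Times (Times (Var 0) (Var 1)) (Var 2)" "Times (Var 0) (Times (Var 1) (Var 2))" "?r x y z z"]
    unfolding S_add_def S_mul_def by auto
  have mc: "mu x y = mu y x" for x y
    using I[of "Times (Var 0) (Var 1)" "Times (Var 1) (Var 0)" "?r x y y y"]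
    unfolding S_add_def S_mul_def by auto
  have dl: "mu x (ad y z) = ad (mu x y) (mu x z)" for x y z
    using I[of "Times (Var 0) (Plus (Var 1) (Var 2))" "Plus (Times (Var 0) (Var 1)) (Times (Var 0) (Var 2))" "?r x y z z"]
    unfolding S_add_def S_mul_def by auto
  have tr: "mu (mu x y) z = ad (mu (mu x y) z) w" for x y z w
    using I[of "Times (Times (Var 0) (Var 1)) (Var 2)" "Plus (Times (Times (Var 0) (Var 1)) (Var 2)) (Var 3)" "?r x y z w"]
    unfolding S_add_def S_mul_def by auto
  have i1: "mu x x = ad (mu x x) x" for x
    using I[of "Times (Var 0) (Var 0)" "Plus (Times (Var 0) (Var 0)) (Var 0)" "?r x x x x"]
    unfolding S_add_def S_mul_def by auto
  have i2: "ad x (mu x y) = ad (mu x x) (mu x y)" for x y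
    using I[of "Plus (Var 0) (Times (Var 0) (Var 1))" "Plus (Times (Var 0) (Var 0)) (Times (Var 0) (Var 1))" "?r x y y y"]
    unfolding S_add_def S_mul_def by auto
  have i5: "ad (mu x x) (mu y z) = ad (ad (mu x x) (mu y z)) (mu x y)" for x y z
    using I[of "Plus (Times (Var 0) (Var 0)) (Times (Var 1) (Var 2))"
       "Plus (Plus (Times (Var 0) (Var 0)) (Times (Var 1) (Var 2))) (Times (Var 0) (Var 1))" "?r x y z z"]
    unfolding S_add_def S_mul_def by auto
  have dr: "mu (ad x y) z = ad (mu x z) (mu y z)" for x y z
  proof -
    have "mu (ad x y) z = mu z (ad x y)" by (rule mc)
    also have "\<dots> = ad (mu z x) (mu z y)" by (rule dl)
    also have "mu z x = mu x z" by (rule mc)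
    also have "mu z y = mu y z" by (rule mc)
    finally show ?thesis .
  qed
  show ?thesis
  proof (intro conjI allI)
    show "ai_semiring ad mu" unfolding ai_semiring_def
    proof (intro conjI allI)
      show "ad (ad x y) z = ad x (ad y z)" for x y z by (rule aa)
      show "ad x y = ad y x" for x y by (rule ac)
      show "ad x x = x" for x by (rule ai)
      show "mu (mu x y) z = mu x (mu y z)" for x y z by (rule ma)
      show "mu x (ad y z) = ad (mu x y) (mu x z)" for x y z by (rule dl)
      show "mu (ad x y) z = ad (mu x z) (mu y z)" for x y z by (rule dr)
    qed
    show "mu x y = mu y x" for x y by (rule mc)
    show "mu x x = ad (mu x x) x" for x by (rule i1)
    show "ad x (mu x y) = ad (mu x x) (mu x y)" for x y by (rule i2)
    show "mu (mu x1 x2) x3 = ad (mu (mu x1 x2) x3) x4" for x1 x2 x3 x4 by (rule tr)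
    show "ad (mu x x) (mu y z) = ad (ad (mu x x) (mu y z)) (mu x y)" for x y z by (rule i5)
  qed
qed

lemma to_sr2:
  assumes "ai_semiring ad mu" and "\<forall>x y. mu x y = mu y x" and "\<forall>x. mu x x = ad (mu x x) x"
    and "\<forall>x y. ad x (mu x y) = ad (mu x x) (mu x y)"
    and "\<forall>x1 x2 x3 x4. mu (mu x1 x2) x3 = ad (mu (mu x1 x2) x3) x4"
    and "\<forall>x y z. ad (mu x x) (mu y z) = ad (ad (mu x x) (mu y z)) (mu x y)"
  shows "sr2 ad mu"
proof -
  have AS: "ai_semiring ad mu" by (rule assms(1))
  have a1: "\<forall>x y z. ad (ad x y) z = ad x (ad y z)" using AS unfolding ai_semiring_def by (elim conjE)
  have a2: "\<forall>x y. ad x y = ad y x" using AS unfolding ai_semiring_def by (elim conjE)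
  have a3: "\<forall>x. ad x x = x" using AS unfolding ai_semiring_def by (elim conjE)
  have a4: "\<forall>x y z. mu (mu x y) z = mu x (mu y z)" using AS unfolding ai_semiring_def by (elim conjE)
  have a5: "\<forall>x y z. mu x (ad y z) = ad (mu x y) (mu x z)" using AS unfolding ai_semiring_def by (elim conjE)
  show ?thesis
    by unfold_locales (rule a1[rule_format] a2[rule_format] a3[rule_format] a4[rule_format]
       a5[rule_format] assms(2-6)[rule_format])+
qed

theorem proposition5p4:
  fixes ad mu :: "'a \<Rightarrow> 'a \<Rightarrow> 'a"
  shows "in_variety_generated S_carrier S_add S_mul ad mu \<longleftrightarrow>
    (ai_semiring ad mu \<and>
     (\<forall>x y. mu x y = mu y x) \<and>
     (\<forall>x. mu x x = ad (mu x x) x) \<and>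
     (\<forall>x y. ad x (mu x y) = ad (mu x x) (mu x y)) \<and>
     (\<forall>x1 x2 x3 x4. mu (mu x1 x2) x3 = ad (mu (mu x1 x2) x3) x4) \<and>
     (\<forall>x y z. ad (mu x x) (mu y z) = ad (ad (mu x x) (mu y z)) (mu x y)))"
proof
  assume h: "in_variety_generated S_carrier S_add S_mul ad mu"
  then show "ai_semiring ad mu \<and>
     (\<forall>x y. mu x y = mu y x) \<and>
     (\<forall>x. mu x x = ad (mu x x) x) \<and>
     (\<forall>x y. ad x (mu x y) = ad (mu x x) (mu x y)) \<and>
     (\<forall>x1 x2 x3 x4. mu (mu x1 x2) x3 = ad (mu (mu x1 x2) x3) x4) \<and>
     (\<forall>x y z. ad (mu x x) (mu y z) = ad (ad (mu x x) (mu y z)) (mu x y))"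
    by (rule fwd)
next
  assume h: "ai_semiring ad mu \<and>
     (\<forall>x y. mu x y = mu y x) \<and>
     (\<forall>x. mu x x = ad (mu x x) x) \<and>
     (\<forall>x y. ad x (mu x y) = ad (mu x x) (mu x y)) \<and>
     (\<forall>x1 x2 x3 x4. mu (mu x1 x2) x3 = ad (mu (mu x1 x2) x3) x4) \<and>
     (\<forall>x y z. ad (mu x x) (mu y z) = ad (ad (mu x x) (mu y z)) (mu x y))"
  then have "sr2 ad mu"
    apply (elim conjE)
    apply (rule to_sr2)
         apply assumption+
    done
  then show "in_variety_generated S_carrier S_add S_mul ad mu"
    unfolding in_variety_generated_def by (intro allI impI) (rule backward)
qed

end
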